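(* (a) For every finite abelian group $G$, every rate $k/l$ achievable by a $(k,l)$ fractional network code over $G$ on $\mathcal{S}_3$ or on $\mathcal{S}_3'$ satisfies $k/l\le 2/3$. (b) Over every finite field $F$, both the capacity and the linear coding capacity of $\mathcal{S}_3$ and of $\mathcal{S}_3'$ equal $2/3$. (Note that every source-terminal pair in these networks has min-cut at least $1$.)
   Context: The sum-network $\mathcal{S}_3$ has sources $s_1,s_2,s_3$, terminals $t_1,t_2,t_3$, intermediate nodes $u_1,v_1,u_2,v_2$, and the twelve edges $(s_1,u_1),(s_3,u_1),(u_1,v_1),(v_1,t_1),(v_1,t_3),(s_2,u_2),(s_3,u_2),(u_2,v_2),(v_2,t_2),(v_2,t_3),(s_2,t_1),(s_1,t_2)$. The network $\mathcal{S}_3'$ is obtained from $\mathcal{S}_3$ by adding an edge $(s_1,t_1)$, and replacing the edge $(s_2,t_1)$ by a new node $u_3$ with edges $(s_2,u_3),(u_3,t_1)$ and an additional edge $(s_1,u_3)$. A $(k,l)$ fractional network code over alphabet $A$: each source $s_i$ holds $X_i\in A^k$ and sends on each outgoing edge a function $A^k\to A^l$ of $X_i$; each edge whose tail $v$ is not a source carries a function $A^{l|In(v)|}\to A^l$ of the vectors on the incoming edges of $v$; each terminal applies a decoding function $A^{l|In(t)|}\to A^k$. It is a solution if every terminal outputs $X_1+X_2+X_3$ (componentwise sum) for all messages. Rate $k/l$ is achievable if a $(k,l)$ fractional solution exists; the capacity is the supremum of achievable rates; for a field $F$, a code is linear if all functions are $F$-linear and the linear coding capacity is the supremum of rates of linear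 solutions. *)

theory Defs
  imports Complex_Main
begin

datatype node = S1 | S2 | S3 | T1 | T2 | T3 | U1 | V1 | U2 | V2 | U3

type_synonym edge = "node \<times> node"

definition sources :: "node set" where "sources = {S1, S2, S3}"
definition terminals :: "node set" where "terminals = {T1, T2, T3}"

text \<open>Edge lists, written in a topological order (every edge appears after
all incoming edges of its tail).\<close>
definition S3_net :: "edge list" where
  "S3_net = [(S1,U1),(S3,U1),(S2,U2),(S3,U2),(S2,T1),(S1,T2),
             (U1,V1),(U2,V2),(V1,T1),(V1,T3),(V2,T2),(V2,T3)]"

definition S3'_net :: "edge list" where
  "S3'_net = [(S1,U1),(S3,U1),(S2,U2),(S3,U2),(S1,T2),(S1,T1),(S2,U3),(S1,U3),
              (U1,V1),(U2,V2),(U3,T1),(V1,T1),(V1,T3),(V2,T2),(V2,T3)]"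

definition In :: "edge list \<Rightarrow> node \<Rightarrow> edge set" where
  "In E v = {e \<in> set E. snd e = v}"

text \<open>Restriction of an edge assignment to a set of edges (other edges carry []),
so that a local function applied to it depends only on those edges.\<close>
definition restr :: "edge set \<Rightarrow> (edge \<Rightarrow> 'a list) \<Rightarrow> edge \<Rightarrow> 'a list" where
  "restr S y = (\<lambda>e. if e \<in> S then y e else [])"

text \<open>Vectors in A^n are lists of length n; componentwise sum and scaling.\<close>
definition vsum :: "'a::plus list \<Rightarrow> 'a list \<Rightarrow> 'a list" where
  "vsum u v = map2 (+) u v"

definition smul :: "'a::times \<Rightarrow> 'a list \<Rightarrow> 'a list" where
  "smul c u = map ((*) c) u"

text \<open>A network code: encoders at source tails (function of the source message),
local functions at non-source tails (function of the incoming edge vectors),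
decoders at terminals (function of the incoming edge vectors).\<close>
record 'a code =
  enc :: "edge \<Rightarrow> 'a list \<Rightarrow> 'a list"
  loc :: "edge \<Rightarrow> (edge \<Rightarrow> 'a list) \<Rightarrow> 'a list"
  dec :: "node \<Rightarrow> (edge \<Rightarrow> 'a list) \<Rightarrow> 'a list"

definition eval_code :: "edge list \<Rightarrow> 'a code \<Rightarrow> (node \<Rightarrow> 'a list) \<Rightarrow> edge \<Rightarrow> 'a list" where
  "eval_code E c x =
     fold (\<lambda>e y. y(e := (if fst e \<in> sources then enc c e (x (fst e))
                          else loc c e (restr (In E (fst e)) y))))
          E (\<lambda>_. [])"

definition is_solution :: "edge list \<Rightarrow> nat \<Rightarrow> nat \<Rightarrow> 'a::ab_group_add code \<Rightarrow> bool" where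
  "is_solution E k l c \<longleftrightarrow>
     (\<forall>x. (\<forall>s\<in>sources. length (x s) = k) \<longrightarrow>
        (\<forall>e\<in>set E. length (eval_code E c x e) = l) \<and>
        (\<forall>t\<in>terminals. dec c t (restr (In E t) (eval_code E c x))
                         = vsum (vsum (x S1) (x S2)) (x S3)))"

definition lin_list :: "nat \<Rightarrow> nat \<Rightarrow> ('a::field list \<Rightarrow> 'a list) \<Rightarrow> bool" where
  "lin_list n m f \<longleftrightarrow>
     (\<forall>u v c. length u = n \<and> length v = n \<longrightarrow>
        length (f u) = m \<and> f (vsum u v) = vsum (f u) (f v) \<and> f (smul c u) = smul c (f u))"

definition lin_map :: "edge set \<Rightarrow> nat \<Rightarrow> nat \<Rightarrow> ((edge \<Rightarrow> 'a::field list) \<Rightarrow> 'a list) \<Rightarrow> bool" where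
  "lin_map S n m g \<longleftrightarrow>
     (\<forall>y z c. (\<forall>e\<in>S. length (y e) = n \<and> length (z e) = n) \<longrightarrow>
        length (g (restr S y)) = m \<and>
        g (restr S (\<lambda>e. vsum (y e) (z e))) = vsum (g (restr S y)) (g (restr S z)) \<and>
        g (restr S (\<lambda>e. smul c (y e))) = smul c (g (restr S y)))"

definition is_linear_code :: "edge list \<Rightarrow> nat \<Rightarrow> nat \<Rightarrow> 'a::field code \<Rightarrow> bool" where
  "is_linear_code E k l c \<longleftrightarrow>
     (\<forall>e\<in>set E. if fst e \<in> sources then lin_list k l (enc c e)
                else lin_map (In E (fst e)) l l (loc c e)) \<and>
     (\<forall>t\<in>terminals. lin_map (In E t) l k (dec c t))"

definition capacity :: "'a::ab_group_add itself \<Rightarrow> edge list \<Rightarrow> real" where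
  "capacity _ E = Sup {real k / real l | k l. 0 < k \<and> 0 < l \<and>
                        (\<exists>c :: 'a code. is_solution E k l c)}"

definition linear_capacity :: "'a::field itself \<Rightarrow> edge list \<Rightarrow> real" where
  "linear_capacity _ E = Sup {real k / real l | k l. 0 < k \<and> 0 < l \<and>
                        (\<exists>c :: 'a code. is_solution E k l c \<and> is_linear_code E k l c)}"

end

theory Submission
  imports Defs
begin
lemma restr_eq: "(\<And>e. e \<in> S \<Longrightarrow> y e = y' e) \<Longrightarrow> restr S y = restr S y'"
  by (auto simp: restr_def)
lemma In_filter: "In E v = set (filter (\<lambda>e. snd e = v) E)"
  by (auto simp: In_def)

definition L :: "nat \<Rightarrow> 'a list set" where "L n = {xs. length xs = n}"

lemma count_bound:
  fixes F :: "('a::finite) list \<times> 'a list \<times> 'a list \<Rightarrow> 'a list \<times> 'a list"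
  assumes "card (UNIV :: 'a set) \<ge> 2"
    and "inj_on F (L k \<times> L k \<times> L k)" and "F ` (L k \<times> L k \<times> L k) \<subseteq> L l \<times> L l"
  shows "3 * k \<le> 2 * l"
proof -
  let ?q = "card (UNIV :: 'a set)"
  have cL: "card (L n :: 'a list set) = ?q ^ n" for n
    using card_lists_length_eq[of "UNIV :: 'a set" n] by (simp add: L_def)
  have fL: "finite (L n :: 'a list set)" for n
    using finite_lists_length_eq[of "UNIV :: 'a set" n] by (simp add: L_def)
  have "card (L k \<times> L k \<times> L k :: ('a list \<times> 'a list \<times> 'a list) set) \<le> card (L l \<times> L l :: ('a list \<times> 'a list) set)"
    by (rule card_inj_on_le[OF assms(2,3)]) (simp add: fL)
  hence "?q ^ (3*k) \<le> ?q ^ (2*l)"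
    by (simp add: card_cartesian_product cL power_add[symmetric] mult.commute numeral_3_eq_3 numeral_2_eq_2)
  moreover have "1 < ?q" using assms(1) by linarith
  ultimately show ?thesis using power_le_imp_le_exp by blast
qed

definition msg :: "'a list \<Rightarrow> 'a list \<Rightarrow> 'a list \<Rightarrow> node \<Rightarrow> 'a list" where
  "msg a b d = (\<lambda>n. if n = S1 then a else if n = S2 then b else if n = S3 then d else [])"

lemma msg_simps[simp]: "msg a b d S1 = a" "msg a b d S2 = b" "msg a b d S3 = d"
  by (simp_all add: msg_def)

lemma vsum_nth: "length a = k \<Longrightarrow> length b = k \<Longrightarrow> length (vsum a b) = k \<and> (\<forall>i<k. vsum a b ! i = a ! i + b ! i)"
  by (simp add: vsum_def)

lemma vsum3_eq:
  assumes "length a = k" "length b = k" "length d = k" "length a' = k" "length b' = k" "length d' = k"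
    and "vsum (vsum a b) d = vsum (vsum a' b') d'" and "i < k"
  shows "a!i + b!i + d!i = a'!i + b'!i + d'!i"
proof -
  have "vsum (vsum a b) d ! i = vsum (vsum a' b') d' ! i" using assms(7) by simp
  thus ?thesis using assms by (simp add: vsum_def)
qed

lemma sol_dec:
  assumes "is_solution E k l c" "length a = k" "length b = k" "length d = k" "t \<in> terminals"
  shows "dec c t (restr (In E t) (eval_code E c (msg a b d))) = vsum (vsum a b) d"
  using assms unfolding is_solution_def sources_def by auto

lemma sol_len:
  assumes "is_solution E k l c" "length a = k" "length b = k" "length d = k" "e \<in> set E"
  shows "length (eval_code E c (msg a b d) e) = l"
  using assms unfolding is_solution_def sources_def by auto

lemma S3_rec: "e \<in> set S3_net \<Longrightarrow> eval_code S3_net c x e =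
  (if fst e \<in> sources then enc c e (x (fst e)) else loc c e (restr (In S3_net (fst e)) (eval_code S3_net c x)))"
  apply (simp add: S3_net_def)
  apply (elim disjE)
  apply (simp_all add: eval_code_def S3_net_def sources_def In_filter)
  apply ((rule arg_cong[where f="loc c _"], rule restr_eq, auto)+)
  done

lemma S3_eqs:
  "eval_code S3_net c x (S1,U1) = enc c (S1,U1) (x S1)"
  "eval_code S3_net c x (S3,U1) = enc c (S3,U1) (x S3)"
  "eval_code S3_net c x (S2,U2) = enc c (S2,U2) (x S2)"
  "eval_code S3_net c x (S3,U2) = enc c (S3,U2) (x S3)"
  "eval_code S3_net c x (S2,T1) = enc c (S2,T1) (x S2)"
  "eval_code S3_net c x (S1,T2) = enc c (S1,T2) (x S1)"
  "eval_code S3_net c x (U1,V1) = loc c (U1,V1) (restr {(S1,U1),(S3,U1)} (eval_code S3_net c x))"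
  "eval_code S3_net c x (U2,V2) = loc c (U2,V2) (restr {(S2,U2),(S3,U2)} (eval_code S3_net c x))"
  "eval_code S3_net c x (V1,T1) = loc c (V1,T1) (restr {(U1,V1)} (eval_code S3_net c x))"
  "eval_code S3_net c x (V1,T3) = loc c (V1,T3) (restr {(U1,V1)} (eval_code S3_net c x))"
  "eval_code S3_net c x (V2,T2) = loc c (V2,T2) (restr {(U2,V2)} (eval_code S3_net c x))"
  "eval_code S3_net c x (V2,T3) = loc c (V2,T3) (restr {(U2,V2)} (eval_code S3_net c x))"
  by (subst S3_rec; simp add: S3_net_def sources_def In_filter)+

lemma S3_In:
  "In S3_net T1 = {(S2,T1),(V1,T1)}" "In S3_net T2 = {(S1,T2),(V2,T2)}" "In S3_net T3 = {(V1,T3),(V2,T3)}"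
  by (auto simp: In_def S3_net_def)

lemma S3_dep:
  fixes c :: "'a code"
  shows
  "x S1 = x' S1 \<Longrightarrow> x S3 = x' S3 \<Longrightarrow> eval_code S3_net c x (U1,V1) = eval_code S3_net c x' (U1,V1)"
  "x S2 = x' S2 \<Longrightarrow> x S3 = x' S3 \<Longrightarrow> eval_code S3_net c x (U2,V2) = eval_code S3_net c x' (U2,V2)"
  "eval_code S3_net c x (U1,V1) = eval_code S3_net c x' (U1,V1) \<Longrightarrow> x S2 = x' S2 \<Longrightarrow>
     restr (In S3_net T1) (eval_code S3_net c x) = restr (In S3_net T1) (eval_code S3_net c x')"
  "eval_code S3_net c x (U2,V2) = eval_code S3_net c x' (U2,V2) \<Longrightarrow> x S1 = x' S1 \<Longrightarrow>
     restr (In S3_net T2) (eval_code S3_net c x) = restr (In S3_net T2) (eval_code S3_net c x')"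
  "eval_code S3_net c x (U1,V1) = eval_code S3_net c x' (U1,V1) \<Longrightarrow> eval_code S3_net c x (U2,V2) = eval_code S3_net c x' (U2,V2) \<Longrightarrow>
     restr (In S3_net T3) (eval_code S3_net c x) = restr (In S3_net T3) (eval_code S3_net c x')"
  apply (simp only: S3_eqs(7), rule arg_cong[where f="loc c _"], rule restr_eq, auto simp: S3_eqs)[1]
  apply (simp only: S3_eqs(8), rule arg_cong[where f="loc c _"], rule restr_eq, auto simp: S3_eqs)[1]
  apply (simp only: S3_In, rule restr_eq; auto simp only: S3_eqs(5,9) insert_iff empty_iff;
         rule arg_cong[where f="loc c _"], rule restr_eq, auto)[1]
  apply (simp only: S3_In, rule restr_eq; auto simp only: S3_eqs(6,11) insert_iff empty_iff;
         rule arg_cong[where f="loc c _"], rule restr_eq, auto)[1]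
  apply (simp only: S3_In, rule restr_eq; auto simp only: S3_eqs(10,12) insert_iff empty_iff;
         rule arg_cong[where f="loc c _"], rule restr_eq, auto)[1]
  done

lemma group3:
  fixes a b d a' b' d' :: "'a::ab_group_add"
  assumes "a + b + d = a' + b' + d'" "a + d = a' + d'" "b + d = b' + d'"
  shows "a = a' \<and> b = b' \<and> d = d'"
proof -
  have dd: "d = (a + d) + (b + d) - (a + b + d)" "d' = (a' + d') + (b' + d') - (a' + b' + d')"
    by (simp_all add: algebra_simps)
  have "d = d'" by (subst dd(1), subst dd(2)) (simp add: assms)
  moreover have "a = a'" using assms(2) \<open>d = d'\<close> by simp
  moreover have "b = b'" using assms(3) \<open>d = d'\<close> by simp
  ultimately show ?thesis by simp
qed

lemma S3_bound:
  fixes c :: "('a::{ab_group_add,finite}) code"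
  assumes card: "card (UNIV :: 'a set) \<ge> 2" and sol: "is_solution S3_net k l c"
  shows "3 * k \<le> 2 * l"
proof (rule count_bound[OF card])
  let ?ev = "\<lambda>a b d. eval_code S3_net c (msg a b d)"
  let ?F = "\<lambda>(a,b,d). (?ev a b d (U1,V1), ?ev a b d (U2,V2))"
  show "?F ` (L k \<times> L k \<times> L k) \<subseteq> L l \<times> L l"
    using sol_len[OF sol] by (auto simp: L_def S3_net_def)
  show "inj_on ?F (L k \<times> L k \<times> L k)"
  proof (rule inj_onI)
    fix p q assume pq: "p \<in> L k \<times> L k \<times> L k" "q \<in> L k \<times> L k \<times> L k" "?F p = ?F q"
    obtain a b d where p: "p = (a,b,d)" by (cases p) auto
    obtain a' b' d' where q: "q = (a',b',d')" by (cases q) auto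
    have mem: "(a,b,d) \<in> L k \<times> L k \<times> L k" "(a',b',d') \<in> L k \<times> L k \<times> L k" using pq p q by auto
    have W1: "?ev a b d (U1,V1) = ?ev a' b' d' (U1,V1)" and W2: "?ev a b d (U2,V2) = ?ev a' b' d' (U2,V2)"
      using pq(3) p q by auto
    define z :: "'a list" where "z = replicate k 0"
    have len: "length a = k" "length b = k" "length d = k" "length a' = k" "length b' = k" "length d' = k" "length z = k"
      using mem by (auto simp: L_def z_def)
    have T: "terminals = {T1,T2,T3}" by (simp add: terminals_def)
    have h3: "vsum (vsum a b) d = vsum (vsum a' b') d'"
      using sol_dec[OF sol len(1-3), of T3] sol_dec[OF sol len(4-6), of T3] S3_dep(5)[OF W1 W2]
      by (simp add: T)
    have "?ev a z d (U1,V1) = ?ev a' z d' (U1,V1)"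
      using S3_dep(1)[of "msg a z d" "msg a b d" c] S3_dep(1)[of "msg a' z d'" "msg a' b' d'" c] W1 by simp
    hence h1: "vsum (vsum a z) d = vsum (vsum a' z) d'"
      using sol_dec[OF sol len(1,7,3), of T1] sol_dec[OF sol len(4,7,6), of T1] S3_dep(3)[of c "msg a z d" "msg a' z d'"]
      by (simp add: T)
    have "?ev z b d (U2,V2) = ?ev z b' d' (U2,V2)"
      using S3_dep(2)[of "msg z b d" "msg a b d" c] S3_dep(2)[of "msg z b' d'" "msg a' b' d'" c] W2 by simp
    hence h2: "vsum (vsum z b) d = vsum (vsum z b') d'"
      using sol_dec[OF sol len(7,2,3), of T2] sol_dec[OF sol len(7,5,6), of T2] S3_dep(4)[of c "msg z b d" "msg z b' d'"]
      by (simp add: T)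
    have "\<forall>i<k. a!i = a'!i \<and> b!i = b'!i \<and> d!i = d'!i"
    proof (intro allI impI)
      fix i assume i: "i < k"
      have "z ! i = 0" using i by (simp add: z_def)
      thus "a!i = a'!i \<and> b!i = b'!i \<and> d!i = d'!i"
        using vsum3_eq[OF len(1-6) h3 i] vsum3_eq[OF len(1,7,3,4,7,6) h1 i] vsum3_eq[OF len(7,2,3,7,5,6) h2 i]
        by (intro group3) simp_all
    qed
    thus "p = q" using len p q by (simp add: list_eq_iff_nth_eq)
  qed
qed

lemma S3'_rec: "e \<in> set S3'_net \<Longrightarrow> eval_code S3'_net c x e =
  (if fst e \<in> sources then enc c e (x (fst e)) else loc c e (restr (In S3'_net (fst e)) (eval_code S3'_net c x)))"
  apply (simp add: S3'_net_def)
  apply (elim disjE)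
  apply (simp_all add: eval_code_def S3'_net_def sources_def In_filter)
  apply ((rule arg_cong[where f="loc c _"], rule restr_eq, auto)+)
  done

lemma S3'_eqs:
  "eval_code S3'_net c x (S1,U1) = enc c (S1,U1) (x S1)"
  "eval_code S3'_net c x (S3,U1) = enc c (S3,U1) (x S3)"
  "eval_code S3'_net c x (S2,U2) = enc c (S2,U2) (x S2)"
  "eval_code S3'_net c x (S3,U2) = enc c (S3,U2) (x S3)"
  "eval_code S3'_net c x (S1,T1) = enc c (S1,T1) (x S1)"
  "eval_code S3'_net c x (S1,T2) = enc c (S1,T2) (x S1)"
  "eval_code S3'_net c x (S2,U3) = enc c (S2,U3) (x S2)"
  "eval_code S3'_net c x (S1,U3) = enc c (S1,U3) (x S1)"
  "eval_code S3'_net c x (U1,V1) = loc c (U1,V1) (restr {(S1,U1),(S3,U1)} (eval_code S3'_net c x))"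
  "eval_code S3'_net c x (U2,V2) = loc c (U2,V2) (restr {(S2,U2),(S3,U2)} (eval_code S3'_net c x))"
  "eval_code S3'_net c x (U3,T1) = loc c (U3,T1) (restr {(S2,U3),(S1,U3)} (eval_code S3'_net c x))"
  "eval_code S3'_net c x (V1,T1) = loc c (V1,T1) (restr {(U1,V1)} (eval_code S3'_net c x))"
  "eval_code S3'_net c x (V1,T3) = loc c (V1,T3) (restr {(U1,V1)} (eval_code S3'_net c x))"
  "eval_code S3'_net c x (V2,T2) = loc c (V2,T2) (restr {(U2,V2)} (eval_code S3'_net c x))"
  "eval_code S3'_net c x (V2,T3) = loc c (V2,T3) (restr {(U2,V2)} (eval_code S3'_net c x))"
  by (subst S3'_rec; simp add: S3'_net_def sources_def In_filter)+

lemma S3'_In: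
  "In S3'_net T1 = {(S1,T1),(U3,T1),(V1,T1)}" "In S3'_net T2 = {(S1,T2),(V2,T2)}" "In S3'_net T3 = {(V1,T3),(V2,T3)}"
  by (auto simp: In_def S3'_net_def)

lemma S3'_dep:
  fixes c :: "'a code"
  shows
  "x S1 = x' S1 \<Longrightarrow> x S3 = x' S3 \<Longrightarrow> eval_code S3'_net c x (U1,V1) = eval_code S3'_net c x' (U1,V1)"
  "x S2 = x' S2 \<Longrightarrow> x S3 = x' S3 \<Longrightarrow> eval_code S3'_net c x (U2,V2) = eval_code S3'_net c x' (U2,V2)"
  "eval_code S3'_net c x (U1,V1) = eval_code S3'_net c x' (U1,V1) \<Longrightarrow> x S1 = x' S1 \<Longrightarrow> x S2 = x' S2 \<Longrightarrow>
     restr (In S3'_net T1) (eval_code S3'_net c x) = restr (In S3'_net T1) (eval_code S3'_net c x')"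
  "eval_code S3'_net c x (U2,V2) = eval_code S3'_net c x' (U2,V2) \<Longrightarrow> x S1 = x' S1 \<Longrightarrow>
     restr (In S3'_net T2) (eval_code S3'_net c x) = restr (In S3'_net T2) (eval_code S3'_net c x')"
  "eval_code S3'_net c x (U1,V1) = eval_code S3'_net c x' (U1,V1) \<Longrightarrow> eval_code S3'_net c x (U2,V2) = eval_code S3'_net c x' (U2,V2) \<Longrightarrow>
     restr (In S3'_net T3) (eval_code S3'_net c x) = restr (In S3'_net T3) (eval_code S3'_net c x')"
  apply (simp only: S3'_eqs(9), rule arg_cong[where f="loc c _"], rule restr_eq, auto simp: S3'_eqs)[1]
  apply (simp only: S3'_eqs(10), rule arg_cong[where f="loc c _"], rule restr_eq, auto simp: S3'_eqs)[1]
  apply (simp only: S3'_In, rule restr_eq; auto simp only: S3'_eqs(5,11,12) insert_iff empty_iff;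
         rule arg_cong[where f="loc c _"], rule restr_eq, auto simp: S3'_eqs)[1]
  apply (simp only: S3'_In, rule restr_eq; auto simp only: S3'_eqs(6,14) insert_iff empty_iff;
         rule arg_cong[where f="loc c _"], rule restr_eq, auto)[1]
  apply (simp only: S3'_In, rule restr_eq; auto simp only: S3'_eqs(13,15) insert_iff empty_iff;
         rule arg_cong[where f="loc c _"], rule restr_eq, auto)[1]
  done

lemma S3'_bound:
  fixes c :: "('a::{ab_group_add,finite}) code"
  assumes card: "card (UNIV :: 'a set) \<ge> 2" and sol: "is_solution S3'_net k l c"
  shows "3 * k \<le> 2 * l"
proof (rule count_bound[OF card])
  let ?ev = "\<lambda>a b d. eval_code S3'_net c (msg a b d)"
  let ?F = "\<lambda>(a,b,d). (?ev a b d (U1,V1), ?ev a b d (U2,V2))"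
  show "?F ` (L k \<times> L k \<times> L k) \<subseteq> L l \<times> L l"
    using sol_len[OF sol] by (auto simp: L_def S3'_net_def)
  show "inj_on ?F (L k \<times> L k \<times> L k)"
  proof (rule inj_onI)
    fix p q assume pq: "p \<in> L k \<times> L k \<times> L k" "q \<in> L k \<times> L k \<times> L k" "?F p = ?F q"
    obtain a b d where p: "p = (a,b,d)" by (cases p) auto
    obtain a' b' d' where q: "q = (a',b',d')" by (cases q) auto
    have mem: "(a,b,d) \<in> L k \<times> L k \<times> L k" "(a',b',d') \<in> L k \<times> L k \<times> L k" using pq p q by auto
    have W1: "?ev a b d (U1,V1) = ?ev a' b' d' (U1,V1)" and W2: "?ev a b d (U2,V2) = ?ev a' b' d' (U2,V2)"
      using pq(3) p q by auto
    define z :: "'a list" where "z = replicate k 0"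
    have len: "length a = k" "length b = k" "length d = k" "length a' = k" "length b' = k" "length d' = k" "length z = k"
      using mem by (auto simp: L_def z_def)
    have T: "terminals = {T1,T2,T3}" by (simp add: terminals_def)
    have h3: "vsum (vsum a b) d = vsum (vsum a' b') d'"
      using sol_dec[OF sol len(1-3), of T3] sol_dec[OF sol len(4-6), of T3] S3'_dep(5)[OF W1 W2]
      by (simp add: T)
    have "?ev z b d (U2,V2) = ?ev z b' d' (U2,V2)"
      using S3'_dep(2)[of "msg z b d" "msg a b d" c] S3'_dep(2)[of "msg z b' d'" "msg a' b' d'" c] W2 by simp
    hence h2: "vsum (vsum z b) d = vsum (vsum z b') d'"
      using sol_dec[OF sol len(7,2,3), of T2] sol_dec[OF sol len(7,5,6), of T2] S3'_dep(4)[of c "msg z b d" "msg z b' d'"]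
      by (simp add: T)
    have zi: "z ! i = 0" if "i < k" for i using that by (simp add: z_def)
    have "\<forall>i<k. a!i = a'!i"
    proof (intro allI impI)
      fix i assume i: "i < k"
      have e1: "a!i + b!i + d!i = a'!i + b'!i + d'!i" using vsum3_eq[OF len(1-6) h3 i] .
      have e2: "b!i + d!i = b'!i + d'!i" using vsum3_eq[OF len(7,2,3,7,5,6) h2 i] zi[OF i] by simp
      have "a!i = (a!i + b!i + d!i) - (b!i + d!i)" "a'!i = (a'!i + b'!i + d'!i) - (b'!i + d'!i)"
        by (simp_all add: algebra_simps)
      thus "a!i = a'!i" using e1 e2 by simp
    qed
    hence aa: "a = a'" using len by (simp add: list_eq_iff_nth_eq)
    have "?ev a z d (U1,V1) = ?ev a z d' (U1,V1)"
      using S3'_dep(1)[of "msg a z d" "msg a b d" c] S3'_dep(1)[of "msg a z d'" "msg a' b' d'" c] W1 aa by simp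
    hence h1: "vsum (vsum a z) d = vsum (vsum a z) d'"
      using sol_dec[OF sol len(1,7,3), of T1] sol_dec[OF sol len(1,7,6), of T1] S3'_dep(3)[of c "msg a z d" "msg a z d'"]
      by (simp add: T)
    have dd: "\<forall>i<k. d!i = d'!i"
      using vsum3_eq[OF len(1,7,3,1,7,6) h1] by simp
    hence "d = d'" using len by (simp add: list_eq_iff_nth_eq)
    moreover have "\<forall>i<k. b!i = b'!i"
      using vsum3_eq[OF len(7,2,3,7,5,6) h2] zi dd by simp
    hence "b = b'" using len by (simp add: list_eq_iff_nth_eq)
    ultimately show "p = q" using aa p q by simp
  qed
qed

definition pad :: "'a::zero list \<Rightarrow> 'a list" where "pad u = [u!0, u!1, 0]"

definition lcode :: "edge \<Rightarrow> ('a::field) code" where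
 "lcode r = \<lparr>enc = (\<lambda>e u. pad u),
    loc = (\<lambda>e y. if e = (U1,V1) then [y (S1,U1)!0 + y (S3,U1)!0, y (S1,U1)!1 + y (S3,U1)!1, y (S3,U1)!0]
                else if e = (U2,V2) then [y (S2,U2)!0 + y (S3,U2)!0, y (S2,U2)!1 + y (S3,U2)!1, y (S3,U2)!1]
                else if e = (V1,T1) \<or> e = (V1,T3) then y (U1,V1)
                else if e = (V2,T2) \<or> e = (V2,T3) then y (U2,V2)
                else y (S2,U3)),
    dec = (\<lambda>t y. if t = T1 then [y r!0 + y (V1,T1)!0, y r!1 + y (V1,T1)!1]
                else if t = T2 then [y (S1,T2)!0 + y (V2,T2)!0, y (S1,T2)!1 + y (V2,T2)!1]
                else [y (V1,T3)!0 + y (V2,T3)!0 - y (V1,T3)!2, y (V1,T3)!1 + y (V2,T3)!1 - y (V2,T3)!2])\<rparr>"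

lemma len2: "length xs = 2 \<Longrightarrow> \<exists>a b. xs = [a,b]"
  by (cases xs; cases "tl xs") auto

lemma vsum_nth'[simp]: "i < length a \<Longrightarrow> i < length b \<Longrightarrow> vsum a b ! i = a!i + b!i"
  by (simp add: vsum_def)
lemma vsum_len[simp]: "length (vsum a b) = min (length a) (length b)"
  by (simp add: vsum_def)
lemma smul_nth[simp]: "i < length a \<Longrightarrow> smul c a ! i = c * a!i"
  by (simp add: smul_def)
lemma smul_len[simp]: "length (smul c a) = length a"
  by (simp add: smul_def)

lemma S3_set: "set S3_net = {(S1,U1),(S3,U1),(S2,U2),(S3,U2),(S2,T1),(S1,T2),
             (U1,V1),(U2,V2),(V1,T1),(V1,T3),(V2,T2),(V2,T3)}" by (simp add: S3_net_def)
lemma S3'_set: "set S3'_net = {(S1,U1),(S3,U1),(S2,U2),(S3,U2),(S1,T2),(S1,T1),(S2,U3),(S1,U3),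
              (U1,V1),(U2,V2),(U3,T1),(V1,T1),(V1,T3),(V2,T2),(V2,T3)}" by (simp add: S3'_net_def)

lemma S3_sol: "is_solution S3_net 2 3 (lcode (S2,T1) :: ('a::field) code)"
  unfolding is_solution_def
proof (intro allI impI conjI)
  fix x :: "node \<Rightarrow> 'a list" assume "\<forall>s\<in>sources. length (x s) = 2"
  then obtain a0 a1 b0 b1 d0 d1 where x: "x S1 = [a0,a1]" "x S2 = [b0,b1]" "x S3 = [d0,d1]"
    using len2 by (metis insertCI sources_def)
  show "\<forall>e\<in>set S3_net. length (eval_code S3_net (lcode (S2,T1)) x e) = 3"
    by (simp add: S3_set S3_eqs lcode_def pad_def restr_def)
  show "\<forall>t\<in>terminals. dec (lcode (S2,T1)) t (restr (In S3_net t) (eval_code S3_net (lcode (S2,T1)) x)) =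
      vsum (vsum (x S1) (x S2)) (x S3)"
    by (simp add: terminals_def S3_In S3_eqs lcode_def pad_def restr_def x vsum_def algebra_simps)
qed

lemma S3'_sol: "is_solution S3'_net 2 3 (lcode (U3,T1) :: ('a::field) code)"
  unfolding is_solution_def
proof (intro allI impI conjI)
  fix x :: "node \<Rightarrow> 'a list" assume "\<forall>s\<in>sources. length (x s) = 2"
  then obtain a0 a1 b0 b1 d0 d1 where x: "x S1 = [a0,a1]" "x S2 = [b0,b1]" "x S3 = [d0,d1]"
    using len2 by (metis insertCI sources_def)
  show "\<forall>e\<in>set S3'_net. length (eval_code S3'_net (lcode (U3,T1)) x e) = 3"
    by (simp add: S3'_set S3'_eqs lcode_def pad_def restr_def)
  show "\<forall>t\<in>terminals. dec (lcode (U3,T1)) t (restr (In S3'_net t) (eval_code S3'_net (lcode (U3,T1)) x)) =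
      vsum (vsum (x S1) (x S2)) (x S3)"
    by (simp add: terminals_def S3'_In S3'_eqs lcode_def pad_def restr_def x vsum_def algebra_simps)
qed

lemma lin_pad: "lin_list 2 3 (pad :: 'a::field list \<Rightarrow> 'a list)"
  unfolding lin_list_def
proof (intro allI impI)
  fix u v :: "'a list" and c assume "length u = 2 \<and> length v = 2"
  then obtain u0 u1 v0 v1 where "u = [u0,u1]" "v = [v0,v1]" using len2 by blast
  thus "length (pad u) = 3 \<and> pad (vsum u v) = vsum (pad u) (pad v) \<and> pad (smul c u) = smul c (pad u)"
    by (simp add: pad_def vsum_def smul_def)
qed

lemma S3_lin: "is_linear_code S3_net 2 3 (lcode (S2,T1) :: ('a::field) code)"
  unfolding is_linear_code_def
  apply (simp add: S3_set sources_def terminals_def In_filter S3_net_def lcode_def lin_pad)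
  apply (auto simp: lin_map_def restr_def algebra_simps)
  apply (simp_all add: vsum_def smul_def algebra_simps)
  done

lemma S3'_lin: "is_linear_code S3'_net 2 3 (lcode (U3,T1) :: ('a::field) code)"
  unfolding is_linear_code_def
  apply (simp add: S3'_set sources_def terminals_def In_filter S3'_net_def lcode_def lin_pad)
  apply (auto simp: lin_map_def restr_def algebra_simps)
  apply (simp_all add: vsum_def smul_def algebra_simps)
  done

lemma frac_bound:
  fixes c :: "('a::{ab_group_add,finite}) code"
  assumes card: "card (UNIV :: 'a set) \<ge> 2" and E: "E \<in> {S3_net, S3'_net}"
    and sol: "is_solution E k l c" and l: "0 < l"
  shows "real k / real l \<le> 2 / 3"
proof -
  have "3 * k \<le> 2 * l" using E S3_bound[OF card] S3'_bound[OF card] sol by auto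
  hence "3 * real k \<le> 2 * real l" by linarith
  thus ?thesis using l by (simp add: divide_simps)
qed

lemma field_card: "card (UNIV :: ('b::{field,finite}) set) \<ge> 2"
proof -
  have "card {0::'b, 1} = 2" by simp
  moreover have "card {0::'b, 1} \<le> card (UNIV :: 'b set)" by (rule card_mono) auto
  ultimately show ?thesis by simp
qed

lemma sol_exists:
  assumes "E \<in> {S3_net, S3'_net}"
  shows "\<exists>c :: ('b::field) code. is_solution E 2 3 c \<and> is_linear_code E 2 3 c"
  using assms S3_sol S3_lin S3'_sol S3'_lin by blast

theorem mainTheorem5:
  assumes "card (UNIV :: ('a::{ab_group_add, finite}) set) \<ge> 2"
  shows "(\<forall>E \<in> {S3_net, S3'_net}. \<forall>k l. 0 < l \<longrightarrow>
            (\<exists>c :: 'a code. is_solution E k l c) \<longrightarrow> real k / real l \<le> 2 / 3)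
       \<and> (\<forall>E \<in> {S3_net, S3'_net}.
            capacity TYPE('b::{field, finite}) E = 2 / 3 \<and>
            linear_capacity TYPE('b) E = 2 / 3)"
proof (intro conjI ballI allI impI)
  fix E k l assume "E \<in> {S3_net, S3'_net}" "0 < (l::nat)" "\<exists>c :: 'a code. is_solution E k l c"
  thus "real k / real l \<le> 2 / 3" using frac_bound[OF assms] by blast
next
  fix E assume E: "E \<in> {S3_net, S3'_net}"
  obtain c :: "'b code" where c: "is_solution E 2 3 c" "is_linear_code E 2 3 c"
    using sol_exists[OF E] by blast
  have two: "(2::real) / 3 = real (2::nat) / real (3::nat)" by simp
  show "capacity TYPE('b) E = 2 / 3"
    unfolding capacity_def
  proof (rule cSup_eq_maximum)
    show "2 / 3 \<in> {real k / real l |k l. 0 < k \<and> 0 < l \<and> (\<exists>c :: 'b code. is_solution E k l c)}"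
      using c by (subst two) (rule CollectI, rule exI[of _ "2::nat"], rule exI[of _ "3::nat"], auto)
  next
    fix x assume "x \<in> {real k / real l |k l. 0 < k \<and> 0 < l \<and> (\<exists>c :: 'b code. is_solution E k l c)}"
    thus "x \<le> 2 / 3" using frac_bound[OF field_card E] by blast
  qed
  show "linear_capacity TYPE('b) E = 2 / 3"
    unfolding linear_capacity_def
  proof (rule cSup_eq_maximum)
    show "2 / 3 \<in> {real k / real l |k l. 0 < k \<and> 0 < l \<and> (\<exists>c :: 'b code. is_solution E k l c \<and> is_linear_code E k l c)}"
      using c by (subst two) (rule CollectI, rule exI[of _ "2::nat"], rule exI[of _ "3::nat"], auto)
  next
    fix x assume "x \<in> {real k / real l |k l. 0 < k \<and> 0 < l \<and> (\<exists>c :: 'b code. is_solution E k l c \<and> is_linear_code E k l c)}"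
    thus "x \<le> 2 / 3" using frac_bound[OF field_card E] by blast
  qed
qed
end
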